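(* Let $d\geq 1$ and let $\mathcal{F}$ be a sample of the wired uniform spanning forest of $\mathbb{Z}^d$. Let $H$ be a (possibly infinite) set of edges of $\mathbb{Z}^d$ that does not contain a cycle. Then there is an ordering $\{e_n\}_{n\geq 1}$ of $H$ such that for all $n\geq 1$ and any partition of $\{e_1,\dots,e_{n-1}\}$ into two sets $A$ and $B$ we have $$\mathbb{P}\big(e_n\in\mathcal{F}\ \big|\ A\subseteq\mathcal{F},\ B\cap\mathcal{F}=\emptyset\big)\geq\frac{1}{2d}.$$
   Context: The wired uniform spanning forest (WUSF) of $\mathbb{Z}^d$ is the weak limit of uniform spanning trees on an exhaustion of $\mathbb{Z}^d$ with wired boundary conditions. *)

theory Defs
  imports "HOL-Probability.Probability"
begin

(* Vertices of Z^d are elements of int ^ 'd (d = CARD('d) >= 1).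
   Edges are unordered pairs {x,y} of vertices at l1-distance 1. *)

definition zd_edges :: "(int ^ 'd) set set" where
  "zd_edges = {{x, y} | x y. (\<Sum>i\<in>UNIV. \<bar>x $ i - y $ i\<bar>) = 1}"

(* Graph relation induced by an edge set T, after mapping vertices through f
   (f = id for Z^d itself; f = quotient map for wired graphs). *)
definition graph_rel :: "('v \<Rightarrow> 'w) \<Rightarrow> 'v set set \<Rightarrow> ('w \<times> 'w) set" where
  "graph_rel f T = {(f u, f v) | u v. {u, v} \<in> T}"

definition acyclic_via :: "('v \<Rightarrow> 'w) \<Rightarrow> 'v set set \<Rightarrow> bool" where
  "acyclic_via f T \<longleftrightarrow>
     (\<forall>u v. {u, v} \<in> T \<longrightarrow> (f u, f v) \<notin> (graph_rel f (T - {{u, v}}))\<^sup>*)"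

definition zbox :: "nat \<Rightarrow> (int ^ 'd) set" where
  "zbox n = {x. \<forall>i. \<bar>x $ i\<bar> \<le> int n}"

(* Edges of the wired graph G_n^W: edges of Z^d with at least one endpoint in the zbox *)
definition wired_edges :: "nat \<Rightarrow> (int ^ 'd) set set" where
  "wired_edges n = {e \<in> zd_edges. e \<inter> zbox n \<noteq> {}}"

(* Quotient map: all vertices outside the zbox are identified to the single vertex None *)
definition wq :: "nat \<Rightarrow> int ^ 'd \<Rightarrow> (int ^ 'd) option" where
  "wq n x = (if x \<in> zbox n then Some x else None)"

(* Spanning trees of the wired graph G_n^W (a multigraph on zbox n plus one boundary vertex):
   connected spanning and acyclic edge sets *)
definition wired_spanning_trees :: "nat \<Rightarrow> (int ^ 'd) set set set" where
  "wired_spanning_trees n =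
     {T. T \<subseteq> wired_edges n
         \<and> (\<forall>x\<in>zbox n. (Some x, None) \<in> (graph_rel (wq n) T)\<^sup>*)
         \<and> acyclic_via (wq n) T}"

definition wired_ust_prob :: "nat \<Rightarrow> (int ^ 'd) set set \<Rightarrow> (int ^ 'd) set set \<Rightarrow> real" where
  "wired_ust_prob n S A =
     real (card {T \<in> wired_spanning_trees n. T \<inter> S = A})
       / real (card (wired_spanning_trees n :: (int ^ 'd) set set set))"

(* F is a sample of the WUSF of Z^d on the probability space M: its law is the weak limit
   of the wired USTs, i.e. all cylinder probabilities are the limits of the wired UST ones. *)
definition is_wusf :: "'a measure \<Rightarrow> ('a \<Rightarrow> (int ^ 'd) set set) \<Rightarrow> bool" where
  "is_wusf M F \<longleftrightarrow>
     prob_space M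
     \<and> (\<forall>\<omega>\<in>space M. F \<omega> \<subseteq> zd_edges)
     \<and> (\<forall>e. {\<omega>\<in>space M. e \<in> F \<omega>} \<in> sets M)
     \<and> (\<forall>S A. finite S \<longrightarrow> S \<subseteq> zd_edges \<longrightarrow> A \<subseteq> S \<longrightarrow>
          (\<lambda>n. wired_ust_prob n S A) \<longlonglongrightarrow> measure M {\<omega>\<in>space M. F \<omega> \<inter> S = A})"

end

theory Submission
  imports Defs "HOL-Library.Nat_Bijection"
begin


lemma gr_sym: "(a,b) \<in> graph_rel f T \<Longrightarrow> (b,a) \<in> graph_rel f T"
  unfolding graph_rel_def by (auto, metis insert_commute)

lemma rt_sym: "(a,b) \<in> (graph_rel f T)\<^sup>* \<Longrightarrow> (b,a) \<in> (graph_rel f T)\<^sup>*"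
  by (induction rule: rtrancl_induct) (auto intro: converse_rtrancl_into_rtrancl gr_sym)

lemma gr_mono: "T \<subseteq> U \<Longrightarrow> graph_rel f T \<subseteq> graph_rel f U"
  unfolding graph_rel_def by auto

lemma rt_mono:
  assumes "T \<subseteq> U" "(a,b) \<in> (graph_rel f T)\<^sup>*" shows "(a,b) \<in> (graph_rel f U)\<^sup>*"
  using rtrancl_mono[OF gr_mono[OF assms(1)]] assms(2) by (rule subsetD)

lemma edge_in: "{u,v} \<in> T \<Longrightarrow> (f u, f v) \<in> graph_rel f T"
  unfolding graph_rel_def by auto

lemma edge_rt: assumes "{u,v} \<in> T" shows "(f u, f v) \<in> (graph_rel f T)\<^sup>*"
  using r_into_rtrancl[OF edge_in[OF assms]] .

lemma gr_E: "(a,b) \<in> graph_rel f T \<Longrightarrow> \<exists>u v. a = f u \<and> b = f v \<and> {u,v} \<in> T"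
  unfolding graph_rel_def by auto

lemma add_edge:
  assumes "(x,y) \<in> (graph_rel f (insert {s,t} X))\<^sup>*"
  shows "(x,y) \<in> (graph_rel f X)\<^sup>* \<or> ((x,f s) \<in> (graph_rel f X)\<^sup>* \<and> (f t,y) \<in> (graph_rel f X)\<^sup>*)
         \<or> ((x,f t) \<in> (graph_rel f X)\<^sup>* \<and> (f s,y) \<in> (graph_rel f X)\<^sup>*)"
  using assms
proof (induction rule: rtrancl_induct)
  case base then show ?case by simp
next
  case (step y z)
  from step.hyps(2) obtain u v where z: "y = f u" "z = f v" "{u,v} \<in> insert {s,t} X"
    using gr_E by metis
  show ?case
  proof (cases "{u,v} \<in> X")
    case True
    hence yz: "(y,z) \<in> graph_rel f X" using z edge_in[of u v X f] by simp
    from step.IH show ?thesis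
    proof (elim disjE conjE)
      assume "(x, y) \<in> (graph_rel f X)\<^sup>*"
      then show ?thesis using rtrancl.rtrancl_into_rtrancl[OF _ yz] by blast
    next
      assume "(x, f s) \<in> (graph_rel f X)\<^sup>*" "(f t, y) \<in> (graph_rel f X)\<^sup>*"
      then show ?thesis using rtrancl.rtrancl_into_rtrancl[OF _ yz] by blast
    next
      assume "(x, f t) \<in> (graph_rel f X)\<^sup>*" "(f s, y) \<in> (graph_rel f X)\<^sup>*"
      then show ?thesis using rtrancl.rtrancl_into_rtrancl[OF _ yz] by blast
    qed
  next
    case False
    hence "{u,v} = {s,t}" using z by auto
    hence "(u = s \<and> v = t) \<or> (u = t \<and> v = s)" by (auto simp: doubleton_eq_iff)
    then show ?thesis using step.IH z(1,2) by auto
  qed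
qed

lemma acyc_noloop: "acyclic_via f T \<Longrightarrow> {u,v} \<in> T \<Longrightarrow> f u \<noteq> f v"
  unfolding acyclic_via_def by fastforce

lemma acycD: "acyclic_via f T \<Longrightarrow> {u,v} \<in> T \<Longrightarrow> (f u, f v) \<notin> (graph_rel f (T - {{u,v}}))\<^sup>*"
  unfolding acyclic_via_def by simp

lemma wq_inj: "x \<in> zbox n \<Longrightarrow> wq n y = wq n x \<Longrightarrow> y = x"
  by (auto simp: wq_def split: if_splits)

lemma exchange:
  fixes T :: "(int^'d) set set"
  assumes T: "T \<in> wired_spanning_trees n" and eT: "{u,w} \<notin> T" and ez: "{u,w} \<in> zd_edges"
    and u: "u \<in> zbox n" and w: "w \<in> zbox n" and uw: "u \<noteq> w"
  shows "\<exists>b. {u,b} \<in> T \<and> insert {u,w} (T - {{u,b}}) \<in> wired_spanning_trees n"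
proof -
  let ?q = "wq n"
  let ?G = "\<lambda>X. (graph_rel ?q X)\<^sup>*"
  define T0 where "T0 = {g\<in>T. u \<notin> g}"
  have Tsub: "T \<subseteq> wired_edges n" and Tcon: "\<forall>x\<in>zbox n. (Some x, None) \<in> ?G T"
    and Tac: "acyclic_via ?q T"
    using T unfolding wired_spanning_trees_def by auto
  have qu: "?q u = Some u" and qw: "?q w = Some w" using u w by (auto simp: wq_def)
  have decomp: "y = ?q u \<or> (\<exists>b. {u,b} \<in> T \<and> (?q b, y) \<in> ?G T0)" if "(?q u, y) \<in> ?G T" for y
    using that
  proof (induction rule: rtrancl_induct)
    case base then show ?case by simp
  next
    case (step y z)
    from step.hyps(2) obtain a c where ac: "y = ?q a" "z = ?q c" "{a,c} \<in> T"
      using gr_E by metis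
    show ?case
    proof (cases "u \<in> {a,c}")
      case True
      then show ?thesis
      proof
        assume "u = a" then show ?thesis using ac by blast
      next
        assume "u \<in> {c}" then show ?thesis using ac by auto
      qed
    next
      case False
      hence "{a,c} \<in> T0" using ac unfolding T0_def by auto
      hence e0: "(y,z) \<in> graph_rel ?q T0" using ac edge_in[of a c T0 ?q] by simp
      from step.IH show ?thesis
      proof
        assume "y = ?q u"
        hence "a = u" using ac wq_inj[OF u] by metis
        then show ?thesis using False by auto
      next
        assume "\<exists>b. {u, b} \<in> T \<and> (?q b, y) \<in> ?G T0"
        then obtain b where "{u, b} \<in> T" "(?q b, y) \<in> ?G T0" by blast
        then show ?thesis using rtrancl.rtrancl_into_rtrancl[OF _ e0] by blast
      qed
    qed
  qed
  have "(?q u, ?q w) \<in> ?G T"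
    using rtrancl_trans[OF bspec[OF Tcon u] rt_sym[OF bspec[OF Tcon w]]] qu qw by simp
  from decomp[OF this] obtain b where ub: "{u,b} \<in> T" and b0: "(?q b, ?q w) \<in> ?G T0"
    using qu qw uw by auto
  define f where "f = {u,b}"
  have T0f: "T0 \<subseteq> T - {f}" unfolding T0_def f_def by auto
  have bw: "(?q b, ?q w) \<in> ?G (T - {f})" using rt_mono[OF T0f b0] .
  have acf: "(?q u, ?q b) \<notin> ?G (T - {f})" using acycD[OF Tac ub] unfolding f_def .
  have uwd: "(?q u, ?q w) \<notin> ?G (T - {f})"
  proof
    assume "(?q u, ?q w) \<in> ?G (T - {f})"
    from rtrancl_trans[OF this rt_sym[OF bw]] show False using acf by simp
  qed
  define T' where "T' = insert {u,w} (T - {f})"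
  have fne: "f \<noteq> {u,w}" using ub eT f_def by auto
  have "T' \<subseteq> wired_edges n" using Tsub ez u unfolding T'_def wired_edges_def by auto
  moreover have "\<forall>x\<in>zbox n. (Some x, None) \<in> ?G T'"
  proof -
    have sub: "T - {f} \<subseteq> T'" unfolding T'_def by auto
    have uw': "(?q u, ?q w) \<in> ?G T'" unfolding T'_def by (rule edge_rt) simp
    have wb': "(?q w, ?q b) \<in> ?G T'" using rt_sym[OF rt_mono[OF sub bw]] .
    have ub': "(?q u, ?q b) \<in> ?G T'" using rtrancl_trans[OF uw' wb'] .
    have "graph_rel ?q T \<subseteq> ?G T'"
    proof
      fix p assume "p \<in> graph_rel ?q T"
      then obtain a c where p: "p = (?q a, ?q c)" "{a,c} \<in> T" using gr_E by (metis surj_pair)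
      show "p \<in> ?G T'"
      proof (cases "{a,c} = f")
        case True
        hence "(a = u \<and> c = b) \<or> (a = b \<and> c = u)" unfolding f_def by (auto simp: doubleton_eq_iff)
        then show ?thesis using ub' rt_sym[OF ub'] p by auto
      next
        case False
        hence "{a,c} \<in> T'" using p unfolding T'_def by auto
        then show ?thesis using p edge_rt[of a c T' ?q] by simp
      qed
    qed
    hence "?G T \<subseteq> ?G T'" by (rule rtrancl_subset_rtrancl)
    then show ?thesis using Tcon by (meson subsetD)
  qed
  moreover have "acyclic_via ?q T'"
    unfolding acyclic_via_def
  proof (intro allI impI)
    fix a c assume ac: "{a,c} \<in> T'"
    show "(?q a, ?q c) \<notin> ?G (T' - {{a,c}})"
    proof (cases "{a,c} = {u,w}")
      case True
      hence eq: "T' - {{a,c}} = T - {f}" unfolding T'_def using eT by auto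
      from True have "(a = u \<and> c = w) \<or> (a = w \<and> c = u)" by (auto simp: doubleton_eq_iff)
      then show ?thesis unfolding eq using uwd rt_sym[of "?q w" "?q u" "?q" "T - {f}"] by auto
    next
      case False
      hence acT: "{a,c} \<in> T" "{a,c} \<noteq> f" using ac unfolding T'_def by auto
      define X where "X = T - {f} - {{a,c}}"
      have eq: "T' - {{a,c}} = insert {u,w} X" unfolding T'_def X_def using False by auto
      have acg: "(?q a, ?q c) \<notin> ?G (T - {{a,c}})" using acycD[OF Tac acT(1)] .
      have X1: "X \<subseteq> T - {{a,c}}" and X2: "X \<subseteq> T - {f}" unfolding X_def by auto
      have fg: "(?q u, ?q b) \<in> ?G (T - {{a,c}})"
        using acT ub unfolding f_def by (intro edge_rt) auto
      have TfX: "T - {f} = insert {a,c} X" unfolding X_def using acT by auto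
      have bw': "(?q b, ?q w) \<in> ?G (insert {a,c} X)" using bw TfX by simp
      note bwc = add_edge[OF bw']
      show ?thesis
      proof
        assume "(?q a, ?q c) \<in> ?G (T' - {{a,c}})"
        hence "(?q a, ?q c) \<in> ?G (insert {u,w} X)" using eq by simp
        note cs = add_edge[OF this]
        have m1: "\<And>x y. (x,y) \<in> ?G X \<Longrightarrow> (x,y) \<in> ?G (T - {{a,c}})" by (rule rt_mono[OF X1])
        have m2: "\<And>x y. (x,y) \<in> ?G X \<Longrightarrow> (x,y) \<in> ?G (T - {f})" by (rule rt_mono[OF X2])
        have symX: "\<And>x y. (x,y) \<in> ?G X \<Longrightarrow> (y,x) \<in> ?G X" by (rule rt_sym)
        note tr = rtrancl_trans[of _ _ "graph_rel ?q X"]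
        from cs show False
        proof (elim disjE conjE)
          assume "(?q a, ?q c) \<in> ?G X" then show False by (rule notE[OF acg m1])
        next
          assume h1: "(?q a, ?q u) \<in> ?G X" and h2: "(?q w, ?q c) \<in> ?G X"
          from bwc show False
          proof (elim disjE conjE)
            assume h3: "(?q b, ?q w) \<in> ?G X"
            have "(?q a, ?q c) \<in> ?G (T - {{a,c}})"
              using rtrancl_trans[OF rtrancl_trans[OF rtrancl_trans[OF m1[OF h1] fg] m1[OF h3]] m1[OF h2]] .
            then show False by (rule notE[OF acg])
          next
            assume "(?q b, ?q a) \<in> ?G X"
            hence "(?q u, ?q b) \<in> ?G X" by (rule tr[OF symX[OF h1] symX])
            then show False by (rule notE[OF acf m2])
          next
            assume "(?q a, ?q w) \<in> ?G X"
            hence "(?q u, ?q w) \<in> ?G X" by (rule tr[OF symX[OF h1]])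
            then show False by (rule notE[OF uwd m2])
          qed
        next
          assume h1: "(?q a, ?q w) \<in> ?G X" and h2: "(?q u, ?q c) \<in> ?G X"
          from bwc show False
          proof (elim disjE conjE)
            assume h3: "(?q b, ?q w) \<in> ?G X"
            have c1: "(?q c, ?q u) \<in> ?G (T - {{a,c}})" using m1[OF symX[OF h2]] .
            have c2: "(?q b, ?q w) \<in> ?G (T - {{a,c}})" using m1[OF h3] .
            have c3: "(?q w, ?q a) \<in> ?G (T - {{a,c}})" using m1[OF symX[OF h1]] .
            have "(?q c, ?q a) \<in> ?G (T - {{a,c}})"
              using rtrancl_trans[OF rtrancl_trans[OF rtrancl_trans[OF c1 fg] c2] c3] .
            then show False by (rule notE[OF acg rt_sym])
          next
            assume "(?q c, ?q w) \<in> ?G X"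
            hence "(?q u, ?q w) \<in> ?G X" by (rule tr[OF h2])
            then show False by (rule notE[OF uwd m2])
          next
            assume "(?q b, ?q c) \<in> ?G X"
            hence "(?q u, ?q b) \<in> ?G X" by (rule tr[OF h2 symX])
            then show False by (rule notE[OF acf m2])
          qed
        qed
      qed
    qed
  qed
  ultimately have "T' \<in> wired_spanning_trees n" unfolding wired_spanning_trees_def by blast
  then show ?thesis using ub unfolding T'_def f_def by blast
qed



lemma l1_one_neighbor:
  fixes u y :: "int^'d"
  assumes "(\<Sum>i\<in>UNIV. \<bar>u $ i - y $ i\<bar>) = 1"
  shows "\<exists>i s. s \<in> {1,-1} \<and> y = (\<chi> j. if j = i then u $ j + s else u $ j)"
proof -
  define D where "D j = \<bar>u $ j - y $ j\<bar>" for j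
  have s1: "sum D UNIV = 1" using assms unfolding D_def by simp
  obtain i where i: "D i \<noteq> 0"
  proof (rule ccontr)
    assume "\<not> thesis"
    hence "\<forall>i. D i = 0" using that by blast
    hence "sum D UNIV = 0" by simp
    then show False using s1 by simp
  qed
  have nn: "\<And>j. D j \<ge> 0" unfolding D_def by simp
  have split: "sum D UNIV = D i + sum D (UNIV - {i})"
    by (simp add: sum.remove)
  have r0: "sum D (UNIV - {i}) \<ge> 0" using nn by (simp add: sum_nonneg)
  have Di: "D i = 1" using split s1 r0 i nn[of i] by linarith
  hence "sum D (UNIV - {i}) = 0" using split s1 by linarith
  hence z: "\<forall>j\<in>UNIV - {i}. D j = 0" using nn by (subst (asm) sum_nonneg_eq_0_iff) auto
  define s where "s = y $ i - u $ i"
  have "s \<in> {1,-1}" using Di unfolding D_def s_def by (auto simp: abs_if split: if_splits)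
  moreover have "y = (\<chi> j. if j = i then u $ j + s else u $ j)"
    unfolding vec_eq_iff s_def using z unfolding D_def by auto
  ultimately show ?thesis by blast
qed

definition edges_at :: "int^'d \<Rightarrow> (int^'d) set set" where
  "edges_at u = {g \<in> zd_edges. u \<in> g}"

lemma edges_at_sub:
  "edges_at (u::int^'d) \<subseteq> (\<lambda>(i,s). {u, (\<chi> j. if j = i then u $ j + s else u $ j)}) ` (UNIV \<times> {1,-1})"
proof
  fix g assume "g \<in> edges_at u"
  then obtain x y where g: "g = {x,y}" "(\<Sum>i\<in>UNIV. \<bar>x $ i - y $ i\<bar>) = 1" "u \<in> g"
    unfolding edges_at_def zd_edges_def by auto
  have sy: "(\<Sum>i\<in>UNIV. \<bar>y $ i - x $ i\<bar>) = 1" using g(2) by (simp add: abs_minus_commute)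
  show "g \<in> (\<lambda>(i,s). {u, (\<chi> j. if j = i then u $ j + s else u $ j)}) ` (UNIV \<times> {1,-1})"
  proof (cases "u = x")
    case True
    then obtain i s where "s \<in> {1,-1}" "y = (\<chi> j. if j = i then u $ j + s else u $ j)"
      using l1_one_neighbor g(2) by blast
    then show ?thesis using g True by (auto intro!: image_eqI[where x="(i,s)"])
  next
    case False
    hence ux: "u = y" using g by auto
    then obtain i s where "s \<in> {1,-1}" "x = (\<chi> j. if j = i then u $ j + s else u $ j)"
      using l1_one_neighbor sy by blast
    then show ?thesis using g ux by (auto intro!: image_eqI[where x="(i,s)"])
  qed
qed

lemma edges_at_finite: "finite (edges_at (u::int^'d))"
  by (rule finite_subset[OF edges_at_sub]) auto

lemma edges_at_card: "card (edges_at (u::int^'d)) \<le> 2 * CARD('d)"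
proof -
  have "card (edges_at u) \<le> card ((\<lambda>(i,s). {u, (\<chi> j. if j = i then u $ j + s else u $ j)}) ` (UNIV \<times> {1::int,-1}))"
    by (rule card_mono[OF _ edges_at_sub]) auto
  also have "\<dots> \<le> card (UNIV \<times> {1::int,-1} :: ('d \<times> int) set)" by (rule card_image_le) auto
  also have "\<dots> = 2 * CARD('d)" by (simp add: card_cartesian_product)
  finally show ?thesis .
qed

lemma count_bound:
  fixes S A :: "(int^'d) set set"
  assumes u: "u \<in> zbox n" and w: "w \<in> zbox n" and ez: "{u,w} \<in> zd_edges" and uw: "u \<noteq> w"
    and eS: "{u,w} \<notin> S" and fresh: "\<forall>g\<in>S. u \<notin> g"
  shows "card {T\<in>wired_spanning_trees n. T \<inter> S = A}
           \<le> 2 * CARD('d) * card {T\<in>wired_spanning_trees n. T \<inter> S = A \<and> {u,w} \<in> T}"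
proof -
  define e where "e = {u,w}"
  define X where "X = {T\<in>wired_spanning_trees n. T \<inter> S = A}"
  define Z where "Z = {T\<in>wired_spanning_trees n. T \<inter> S = A \<and> e \<in> T}"
  define fb where "fb T = (SOME b. {u,b} \<in> T \<and> insert e (T - {{u,b}}) \<in> wired_spanning_trees n)" for T
  define ff where "ff T = {u, fb T}" for T
  define Phi where "Phi T = (if e \<in> T then (e, T) else (ff T, insert e (T - {ff T})))" for T
  have ffP: "ff T \<in> T \<and> insert e (T - {ff T}) \<in> wired_spanning_trees n"
    if "T \<in> wired_spanning_trees n" "e \<notin> T" for T
  proof -
    have "\<exists>b. {u,b} \<in> T \<and> insert e (T - {{u,b}}) \<in> wired_spanning_trees n"
      using exchange[OF that(1) _ ez u w uw] that(2) unfolding e_def by blast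
    from someI_ex[OF this] show ?thesis unfolding ff_def fb_def by blast
  qed
  have Tsub: "T \<subseteq> zd_edges" if "T \<in> wired_spanning_trees n" for T
    using that unfolding wired_spanning_trees_def wired_edges_def by auto
  have maps: "Phi ` X \<subseteq> edges_at u \<times> Z"
  proof
    fix p assume "p \<in> Phi ` X"
    then obtain T where T: "T \<in> X" "p = Phi T" by blast
    show "p \<in> edges_at u \<times> Z"
    proof (cases "e \<in> T")
      case True
      then show ?thesis using T ez unfolding Phi_def edges_at_def e_def Z_def X_def by auto
    next
      case False
      have Tw: "T \<in> wired_spanning_trees n" using T unfolding X_def by auto
      note f = ffP[OF Tw False]
      have fS: "ff T \<notin> S" using fresh unfolding ff_def by auto
      have "ff T \<in> edges_at u" using f Tsub[OF Tw] unfolding edges_at_def ff_def by auto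
      moreover have "insert e (T - {ff T}) \<inter> S = A"
        using T(1) fS eS unfolding X_def e_def by auto
      ultimately show ?thesis using T f False unfolding Phi_def Z_def by auto
    qed
  qed
  have inj: "inj_on Phi X"
  proof
    fix T1 T2 assume T: "T1 \<in> X" "T2 \<in> X" "Phi T1 = Phi T2"
    have Tw: "T1 \<in> wired_spanning_trees n" "T2 \<in> wired_spanning_trees n" using T unfolding X_def by auto
    show "T1 = T2"
    proof (cases "e \<in> T1")
      case True
      show ?thesis
      proof (cases "e \<in> T2")
        case True
        then show ?thesis using T \<open>e \<in> T1\<close> unfolding Phi_def by auto
      next
        case False
        have "ff T2 \<in> T2" using ffP[OF Tw(2) False] by blast
        moreover have "ff T2 = e" using T \<open>e \<in> T1\<close> False unfolding Phi_def by auto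
        ultimately show ?thesis using False by simp
      qed
    next
      case False
      show ?thesis
      proof (cases "e \<in> T2")
        case True
        have "ff T1 \<in> T1" using ffP[OF Tw(1) False] by blast
        moreover have "ff T1 = e" using T \<open>e \<in> T2\<close> False unfolding Phi_def by auto
        ultimately show ?thesis using False by simp
      next
        case F2: False
        have f1: "ff T1 \<in> T1" using ffP[OF Tw(1) False] by blast
        have f2: "ff T2 \<in> T2" using ffP[OF Tw(2) F2] by blast
        have eqf: "ff T1 = ff T2" and eqT: "insert e (T1 - {ff T1}) = insert e (T2 - {ff T2})"
          using T False F2 unfolding Phi_def by auto
        have "T1 = insert (ff T1) (insert e (T1 - {ff T1}) - {e})" using f1 False by auto
        also have "\<dots> = insert (ff T2) (insert e (T2 - {ff T2}) - {e})" using eqf eqT by simp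
        also have "\<dots> = T2" using f2 F2 by auto
        finally show ?thesis .
      qed
    qed
  qed
  show ?thesis
  proof (cases "finite Z")
    case True
    have "card X \<le> card (edges_at u \<times> Z)"
      by (rule card_inj_on_le[OF inj maps]) (simp add: edges_at_finite True)
    also have "\<dots> = card (edges_at u) * card Z" by (simp add: card_cartesian_product)
    also have "\<dots> \<le> 2 * CARD('d) * card Z" by (rule mult_le_mono1, rule edges_at_card)
    finally show ?thesis unfolding X_def Z_def e_def .
  next
    case False
    have "Z \<subseteq> X" unfolding X_def Z_def by auto
    hence "infinite X" using False finite_subset by blast
    then show ?thesis unfolding X_def by simp
  qed
qed



lemma in_zbox_large: "\<exists>N0. \<forall>N\<ge>N0. (u::int^'d) \<in> zbox N"
proof -
  define N0 where "N0 = nat (\<Sum>i\<in>UNIV. \<bar>u $ i\<bar>)"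
  have b: "\<bar>u $ i\<bar> \<le> (\<Sum>i\<in>UNIV. \<bar>u $ i\<bar>)" for i
    by (rule member_le_sum) auto
  have "u \<in> zbox N" if "N0 \<le> N" for N
    unfolding zbox_def
  proof (intro CollectI allI)
    fix i
    have "(\<Sum>i\<in>UNIV. \<bar>u $ i\<bar>) \<le> int N0" unfolding N0_def by simp
    also have "\<dots> \<le> int N" using that by simp
    finally show "\<bar>u $ i\<bar> \<le> int N" using b[of i] by linarith
  qed
  then show ?thesis by blast
qed

lemma step_ineq:
  fixes M :: "'a measure" and F :: "'a \<Rightarrow> (int ^ 'd) set set"
  assumes wusf: "is_wusf M F" and Sf: "finite S" and Sz: "S \<subseteq> zd_edges" and AS: "A \<subseteq> S"
    and ez: "{u,w} \<in> zd_edges" and uw: "u \<noteq> w" and eS: "{u,w} \<notin> S" and fresh: "\<forall>g\<in>S. u \<notin> g"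
  shows "measure M {\<omega>\<in>space M. F \<omega> \<inter> insert {u,w} S = insert {u,w} A}
           \<ge> (1 / (2 * real CARD('d))) * measure M {\<omega>\<in>space M. F \<omega> \<inter> S = A}"
proof -
  define e where "e = {u,w}"
  define c where "c = 1 / (2 * real CARD('d))"
  have L: "\<And>S A. finite S \<Longrightarrow> S \<subseteq> zd_edges \<Longrightarrow> A \<subseteq> S \<Longrightarrow>
      (\<lambda>n. wired_ust_prob n S A) \<longlonglongrightarrow> measure M {\<omega>\<in>space M. F \<omega> \<inter> S = A}"
    using wusf unfolding is_wusf_def by blast
  have lim1: "(\<lambda>n. wired_ust_prob n S A) \<longlonglongrightarrow> measure M {\<omega>\<in>space M. F \<omega> \<inter> S = A}"
    by (rule L[OF Sf Sz AS])
  have lim2: "(\<lambda>n. wired_ust_prob n (insert e S) (insert e A)) \<longlonglongrightarrow>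
      measure M {\<omega>\<in>space M. F \<omega> \<inter> insert e S = insert e A}"
    by (rule L) (use Sf Sz AS ez e_def in auto)
  have lim3: "(\<lambda>n. c * wired_ust_prob n S A) \<longlonglongrightarrow> c * measure M {\<omega>\<in>space M. F \<omega> \<inter> S = A}"
    by (intro tendsto_mult_left lim1)
  obtain N1 where N1: "\<forall>N\<ge>N1. u \<in> zbox N" using in_zbox_large by blast
  obtain N2 where N2: "\<forall>N\<ge>N2. w \<in> zbox N" using in_zbox_large by blast
  have "\<exists>N0. \<forall>N\<ge>N0. c * wired_ust_prob N S A \<le> wired_ust_prob N (insert e S) (insert e A)"
  proof (intro exI[of _ "max N1 N2"] allI impI)
    fix N assume "max N1 N2 \<le> N"
    hence u: "u \<in> zbox N" and w: "w \<in> zbox N" using N1 N2 by auto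
    have eA: "e \<notin> A" using AS eS e_def by auto
    have seteq: "{T\<in>wired_spanning_trees N. T \<inter> insert e S = insert e A}
        = {T\<in>wired_spanning_trees N. T \<inter> S = A \<and> e \<in> T}"
    proof -
      have key: "(T \<inter> insert e S = insert e A) \<longleftrightarrow> (T \<inter> S = A \<and> e \<in> T)" for T
      proof (cases "e \<in> T")
        case True
        have "T \<inter> insert e S = insert e (T \<inter> S)" using True by (simp add: Int_insert_right)
        moreover have "e \<notin> T \<inter> S" using eS unfolding e_def by simp
        ultimately show ?thesis using True eA by (simp add: insert_ident)
      next
        case False
        then show ?thesis by auto
      qed
      show ?thesis by (simp only: key)
    qed
    have cbn: "card {T\<in>wired_spanning_trees N. T \<inter> S = A}
           \<le> 2 * CARD('d) * card {T\<in>wired_spanning_trees N. T \<inter> S = A \<and> e \<in> T}"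
      using count_bound[OF u w ez uw eS fresh, of A] unfolding e_def .
    define x where "x = real (card {T\<in>wired_spanning_trees N. T \<inter> S = A})"
    define z where "z = real (card {T\<in>wired_spanning_trees N. T \<inter> S = A \<and> e \<in> T})"
    define D where "D = real (card (wired_spanning_trees N :: (int ^ 'd) set set set))"
    have "x \<le> real (2 * CARD('d) * card {T\<in>wired_spanning_trees N. T \<inter> S = A \<and> e \<in> T})"
      unfolding x_def using cbn by (simp only: of_nat_le_iff)
    hence cb: "x \<le> 2 * real CARD('d) * z" unfolding z_def by simp
    have pos: "2 * real CARD('d) > 0" by simp
    have cxz: "c * x \<le> z"
      using cb pos unfolding c_def by (simp add: field_simps)
    have D0: "D \<ge> 0" unfolding D_def by simp
    have "c * (x / D) = (c * x) / D" by simp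
    also have "\<dots> \<le> z / D" using divide_right_mono[OF cxz D0] .
    finally have "c * (x / D) \<le> z / D" .
    then show "c * wired_ust_prob N S A \<le> wired_ust_prob N (insert e S) (insert e A)"
      unfolding wired_ust_prob_def seteq x_def z_def D_def .
  qed
  hence "c * measure M {\<omega>\<in>space M. F \<omega> \<inter> S = A}
      \<le> measure M {\<omega>\<in>space M. F \<omega> \<inter> insert e S = insert e A}"
    by (rule LIMSEQ_le[OF lim3 lim2])
  then show ?thesis unfolding c_def e_def .
qed



definition hrel :: "'v set set \<Rightarrow> ('v \<times> 'v) set" where "hrel H = graph_rel id H"
definition root :: "'v set set \<Rightarrow> 'v \<Rightarrow> 'v" where "root H v = (SOME r. (v,r) \<in> (hrel H)\<^sup>*)"
definition dr :: "'v set set \<Rightarrow> 'v \<Rightarrow> 'v \<Rightarrow> nat" where "dr H r v = (LEAST k. (r,v) \<in> (hrel H)^^k)"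
definition dep :: "'v set set \<Rightarrow> 'v \<Rightarrow> nat" where "dep H v = dr H (root H v) v"
definition par :: "'v set set \<Rightarrow> ('v \<times> 'v) set" where
  "par H = {(x,v). {x,v} \<in> H \<and> dep H v = Suc (dep H x)}"
definition lowset :: "'v set set \<Rightarrow> 'v \<Rightarrow> nat \<Rightarrow> 'v set set" where
  "lowset H r k = {g\<in>H. \<forall>z\<in>g. dr H r z \<le> k}"

lemma hrel_edge: "{x,y} \<in> H \<Longrightarrow> (x,y) \<in> hrel H"
  unfolding hrel_def using edge_in[of x y H id] by simp

lemma hrelE: "(x,y) \<in> hrel H \<Longrightarrow> {x,y} \<in> H"
  unfolding hrel_def using gr_E[of x y id H] by auto

lemma hsym: "(x,y) \<in> (hrel H)\<^sup>* \<Longrightarrow> (y,x) \<in> (hrel H)\<^sup>*"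
  unfolding hrel_def by (rule rt_sym)

lemma hmono: "G \<subseteq> H \<Longrightarrow> (x,y) \<in> (hrel G)\<^sup>* \<Longrightarrow> (x,y) \<in> (hrel H)\<^sup>*"
  unfolding hrel_def by (rule rt_mono)

lemma hacyc: "acyclic_via id H \<Longrightarrow> {x,y} \<in> H \<Longrightarrow> (x,y) \<notin> (hrel (H - {{x,y}}))\<^sup>*"
  unfolding hrel_def using acycD[of id H x y] by simp

lemma root_conn: "(v, root H v) \<in> (hrel H)\<^sup>*"
  unfolding root_def by (rule someI[of _ v]) simp

lemma root_eq: "(x,v) \<in> (hrel H)\<^sup>* \<Longrightarrow> root H x = root H v"
proof -
  assume a: "(x,v) \<in> (hrel H)\<^sup>*"
  have iff: "(x,r) \<in> (hrel H)\<^sup>* \<longleftrightarrow> (v,r) \<in> (hrel H)\<^sup>*" for r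
  proof
    assume "(x,r) \<in> (hrel H)\<^sup>*"
    from rtrancl_trans[OF hsym[OF a] this] show "(v,r) \<in> (hrel H)\<^sup>*" .
  next
    assume "(v,r) \<in> (hrel H)\<^sup>*"
    from rtrancl_trans[OF a this] show "(x,r) \<in> (hrel H)\<^sup>*" .
  qed
  show ?thesis unfolding root_def by (simp only: iff)
qed

lemma dr_pow: "(r,v) \<in> (hrel H)\<^sup>* \<Longrightarrow> (r,v) \<in> (hrel H)^^(dr H r v)"
  unfolding dr_def by (rule LeastI_ex) (simp add: rtrancl_power)

lemma dr_le: "(r,v) \<in> (hrel H)^^k \<Longrightarrow> dr H r v \<le> k"
  unfolding dr_def by (rule Least_le)

lemma low: "(r,v) \<in> (hrel H)^^k \<Longrightarrow> (r,v) \<in> (hrel (lowset H r k))\<^sup>*"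
proof (induction k arbitrary: v)
  case 0 then show ?case by simp
next
  case (Suc k)
  from Suc.prems obtain z where z: "(r,z) \<in> (hrel H)^^k" "(z,v) \<in> hrel H" by (rule relpow_Suc_E)
  have zv: "{z,v} \<in> H" using hrelE[OF z(2)] .
  have dz: "dr H r z \<le> k" using dr_le[OF z(1)] .
  have dv: "dr H r v \<le> Suc k" using dr_le[OF Suc.prems] .
  have sub: "lowset H r k \<subseteq> lowset H r (Suc k)" unfolding lowset_def by auto
  have "(r,z) \<in> (hrel (lowset H r (Suc k)))\<^sup>*" using hmono[OF sub Suc.IH[OF z(1)]] .
  moreover have "{z,v} \<in> lowset H r (Suc k)" using zv dz dv unfolding lowset_def by auto
  ultimately show ?case by (rule rtrancl.rtrancl_into_rtrancl[OF _ hrel_edge])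
qed

lemma triangle: assumes "(r,x) \<in> (hrel H)\<^sup>*" "{x,y} \<in> H" shows "dr H r y \<le> Suc (dr H r x)"
  using dr_le[OF relpow_Suc_I[OF dr_pow[OF assms(1)] hrel_edge[OF assms(2)]]] .

lemma low_excl: "dr H r x > k \<Longrightarrow> x \<in> g \<Longrightarrow> g \<notin> lowset H r k"
proof
  assume a: "dr H r x > k" "x \<in> g" "g \<in> lowset H r k"
  hence "dr H r x \<le> k" unfolding lowset_def by auto
  then show False using a(1) by simp
qed

lemma no_eq:
  assumes ac: "acyclic_via id H" and xy: "{x,y} \<in> H" and rx: "(r,x) \<in> (hrel H)\<^sup>*"
  shows "dr H r x \<noteq> dr H r y"
proof
  assume eq: "dr H r x = dr H r y"
  have ry: "(r,y) \<in> (hrel H)\<^sup>*" using rtrancl.rtrancl_into_rtrancl[OF rx hrel_edge[OF xy]] .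
  have nxy: "x \<noteq> y" using hacyc[OF ac xy] by auto
  define k where "k = dr H r x"
  have px: "(r,x) \<in> (hrel H)^^k" using dr_pow[OF rx] k_def by simp
  have py: "(r,y) \<in> (hrel H)^^k" using dr_pow[OF ry] k_def eq by simp
  show False
  proof (cases k)
    case 0
    then show False using px py nxy by simp
  next
    case (Suc j)
    from px obtain z where z: "(r,z) \<in> (hrel H)^^j" "(z,x) \<in> hrel H" using Suc by (auto elim: relpow_Suc_E)
    from py obtain z' where z': "(r,z') \<in> (hrel H)^^j" "(z',y) \<in> hrel H" using Suc by (auto elim: relpow_Suc_E)
    let ?H' = "H - {{x,y}}"
    have Lsub: "lowset H r j \<subseteq> ?H'"
      using low_excl[of j H r x "{x,y}"] k_def Suc unfolding lowset_def by auto
    have dz: "dr H r z \<le> j" "dr H r z' \<le> j" using dr_le[OF z(1)] dr_le[OF z'(1)] by auto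
    have zx: "{z,x} \<in> ?H'" using hrelE[OF z(2)] dz k_def Suc eq by (auto simp: doubleton_eq_iff)
    have zy: "{z',y} \<in> ?H'" using hrelE[OF z'(2)] dz k_def Suc eq by (auto simp: doubleton_eq_iff)
    have a1: "(x,z) \<in> (hrel ?H')\<^sup>*" using hsym[OF r_into_rtrancl[OF hrel_edge[OF zx]]] .
    have a2: "(z,r) \<in> (hrel ?H')\<^sup>*" using hsym[OF hmono[OF Lsub low[OF z(1)]]] .
    have a3: "(r,z') \<in> (hrel ?H')\<^sup>*" using hmono[OF Lsub low[OF z'(1)]] .
    have a4: "(z',y) \<in> (hrel ?H')\<^sup>*" using r_into_rtrancl[OF hrel_edge[OF zy]] .
    have "(x,y) \<in> (hrel ?H')\<^sup>*" using rtrancl_trans[OF rtrancl_trans[OF rtrancl_trans[OF a1 a2] a3] a4] .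
    then show False using hacyc[OF ac xy] by simp
  qed
qed

lemma uniq_par:
  assumes ac: "acyclic_via id H" and xv: "{x,v} \<in> H" and xv': "{x',v} \<in> H"
    and rv: "(r,v) \<in> (hrel H)\<^sup>*" and d1: "dr H r v = Suc (dr H r x)" and d2: "dr H r v = Suc (dr H r x')"
  shows "x = x'"
proof (rule ccontr)
  assume ne: "x \<noteq> x'"
  have rx: "(r,x) \<in> (hrel H)\<^sup>*" using rtrancl_trans[OF rv hsym[OF r_into_rtrancl[OF hrel_edge[OF xv]]]] .
  have rx': "(r,x') \<in> (hrel H)\<^sup>*" using rtrancl_trans[OF rv hsym[OF r_into_rtrancl[OF hrel_edge[OF xv']]]] .
  define j where "j = dr H r x"
  have px: "(r,x) \<in> (hrel H)^^j" using dr_pow[OF rx] j_def by simp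
  have px': "(r,x') \<in> (hrel H)^^j" using dr_pow[OF rx'] j_def d1 d2 by simp
  let ?H' = "H - {{x,v}}"
  have Lsub: "lowset H r j \<subseteq> ?H'"
    using low_excl[of j H r v "{x,v}"] j_def d1 unfolding lowset_def by auto
  have vx': "v \<noteq> x'" using d2 by auto
  have e': "{x',v} \<in> ?H'" using xv' ne vx' by (auto simp: doubleton_eq_iff)
  have a1: "(x,r) \<in> (hrel ?H')\<^sup>*" using hsym[OF hmono[OF Lsub low[OF px]]] .
  have a2: "(r,x') \<in> (hrel ?H')\<^sup>*" using hmono[OF Lsub low[OF px']] .
  have a3: "(x',v) \<in> (hrel ?H')\<^sup>*" using r_into_rtrancl[OF hrel_edge[OF e']] .
  have "(x,v) \<in> (hrel ?H')\<^sup>*" using rtrancl_trans[OF rtrancl_trans[OF a1 a2] a3] .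
  then show False using hacyc[OF ac xv] by simp
qed

lemma edge_root:
  assumes "{x,y} \<in> H"
  shows "root H y = root H x" "(root H x, x) \<in> (hrel H)\<^sup>*" "(root H x, y) \<in> (hrel H)\<^sup>*"
proof -
  have xy: "(x,y) \<in> (hrel H)\<^sup>*" using r_into_rtrancl[OF hrel_edge[OF assms]] .
  show "root H y = root H x" using root_eq[OF xy] by simp
  show rx: "(root H x, x) \<in> (hrel H)\<^sup>*" using hsym[OF root_conn] .
  show "(root H x, y) \<in> (hrel H)\<^sup>*" using rtrancl_trans[OF rx xy] .
qed

lemma edge_dep:
  assumes ac: "acyclic_via id H" and xy: "{x,y} \<in> H"
  shows "(x,y) \<in> par H \<or> (y,x) \<in> par H"
proof -
  note r = edge_root[OF xy]
  have yx: "{y,x} \<in> H" using xy by (simp add: insert_commute)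
  have t1: "dr H (root H x) y \<le> Suc (dr H (root H x) x)" using triangle[OF r(2) xy] .
  have t2: "dr H (root H x) x \<le> Suc (dr H (root H x) y)" using triangle[OF r(3) yx] .
  have ne: "dr H (root H x) x \<noteq> dr H (root H x) y" using no_eq[OF ac xy r(2)] .
  have "dep H y = Suc (dep H x) \<or> dep H x = Suc (dep H y)"
    unfolding dep_def r(1) using t1 t2 ne by linarith
  then show ?thesis unfolding par_def using xy yx by auto
qed

lemma par_uniq:
  assumes ac: "acyclic_via id H" and "(x,v) \<in> par H" "(x',v) \<in> par H"
  shows "x = x'"
proof -
  have e: "{x,v} \<in> H" "{x',v} \<in> H" using assms unfolding par_def by auto
  have rr: "root H x = root H v" "root H x' = root H v"
    using edge_root(1)[OF e(1)] edge_root(1)[OF e(2)] by auto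
  have rv: "(root H v, v) \<in> (hrel H)\<^sup>*" using edge_root(3)[OF e(1)] rr by simp
  show ?thesis
    using uniq_par[OF ac e rv] assms(2,3) rr unfolding par_def dep_def by auto
qed

definition phi :: "'v set set \<Rightarrow> 'v set \<Rightarrow> 'v" where
  "phi H h = (SOME v. \<exists>x. h = {x,v} \<and> (x,v) \<in> par H)"

lemma phi_ex:
  assumes ac: "acyclic_via id H" and two: "\<forall>h\<in>H. \<exists>x y. h = {x,y}" and h: "h \<in> H"
  shows "\<exists>x. h = {x, phi H h} \<and> (x, phi H h) \<in> par H"
proof -
  obtain x y where xy: "h = {x,y}" using two h by blast
  have "\<exists>v x. h = {x,v} \<and> (x,v) \<in> par H"
    using edge_dep[OF ac, of x y] h xy by (metis insert_commute)
  then show ?thesis unfolding phi_def by (metis (mono_tags, lifting) someI_ex)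
qed

lemma phi_inj:
  assumes ac: "acyclic_via id H" and two: "\<forall>h\<in>H. \<exists>x y. h = {x,y}"
  shows "inj_on (phi H) H"
proof
  fix h g assume hg: "h \<in> H" "g \<in> H" "phi H h = phi H g"
  obtain x where x: "h = {x, phi H h}" "(x, phi H h) \<in> par H" using phi_ex[OF ac two hg(1)] by blast
  obtain y where y: "g = {y, phi H g}" "(y, phi H g) \<in> par H" using phi_ex[OF ac two hg(2)] by blast
  have "x = y" using par_uniq[OF ac x(2)] y(2) hg(3) by simp
  then show "h = g" using x y hg(3) by simp
qed

lemma phi_fresh:
  assumes ac: "acyclic_via id H" and two: "\<forall>h\<in>H. \<exists>x y. h = {x,y}"
    and hg: "h \<in> H" "g \<in> H" "g \<noteq> h" "phi H h \<in> g"
  shows "(phi H h, phi H g) \<in> par H"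
proof -
  obtain y where y: "g = {y, phi H g}" "(y, phi H g) \<in> par H" using phi_ex[OF ac two hg(2)] by blast
  have "phi H h \<noteq> phi H g" using inj_onD[OF phi_inj[OF ac two]] hg by metis
  hence "phi H h = y" using hg(4) y(1) by auto
  then show ?thesis using y by simp
qed

definition anc :: "'v set set \<Rightarrow> 'v \<Rightarrow> 'v set" where "anc H v = {y. (y,v) \<in> (par H)\<^sup>*}"

lemma par_dep: "(y,v) \<in> (par H)\<^sup>* \<Longrightarrow> y = v \<or> dep H y < dep H v"
  by (induction rule: rtrancl_induct) (auto simp: par_def)

lemma anc_finite:
  assumes ac: "acyclic_via id H"
  shows "finite (anc H v)"
proof (induction "dep H v" arbitrary: v rule: less_induct)
  case less
  define P where "P = {p. (p,v) \<in> par H}"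
  have Pf: "finite P"
  proof (cases "P = {}")
    case False
    then obtain p where p: "p \<in> P" by blast
    hence "P \<subseteq> {p}" using par_uniq[OF ac] unfolding P_def by blast
    then show ?thesis using finite_subset by blast
  qed simp
  have "anc H v \<subseteq> insert v (\<Union>p\<in>P. anc H p)"
  proof
    fix y assume "y \<in> anc H v"
    hence "(y,v) \<in> (par H)\<^sup>*" unfolding anc_def by simp
    then show "y \<in> insert v (\<Union>p\<in>P. anc H p)"
    proof (cases rule: rtranclE)
      case (step p) then show ?thesis unfolding P_def anc_def by auto
    qed simp
  qed
  moreover have "finite (anc H p)" if "p \<in> P" for p
    using less that unfolding P_def par_def by auto
  moreover have "finite (insert v (\<Union>p\<in>P. anc H p))"
    using Pf calculation(2) by simp
  ultimately show ?case using finite_subset by blast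
qed

lemma set_encode_strict:
  assumes "finite B" "A \<subset> B"
  shows "set_encode A < set_encode B"
proof -
  have fA: "finite A" using assms finite_subset by auto
  have "sum ((^) (2::nat)) B = sum ((^) 2) (B - A) + sum ((^) 2) A"
    by (rule sum.subset_diff) (use assms in auto)
  hence "set_encode B = set_encode A + sum ((^) 2) (B - A)"
    unfolding set_encode_def by simp
  moreover have "sum ((^) (2::nat)) (B - A) > 0"
    using assms by (intro sum_pos) auto
  ultimately show ?thesis by simp
qed

definition rk :: "('v::countable) set set \<Rightarrow> 'v \<Rightarrow> nat" where
  "rk H v = set_encode (to_nat ` anc H v)"

lemma rk_less:
  assumes ac: "acyclic_via id H" and pv: "(p,v) \<in> par H"
  shows "rk H p < rk H v"
proof -
  have sub: "anc H p \<subseteq> anc H v" using pv unfolding anc_def by auto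
  have vin: "v \<in> anc H v" unfolding anc_def by simp
  have vout: "v \<notin> anc H p" using pv par_dep unfolding anc_def par_def by fastforce
  have "anc H p \<subset> anc H v" using sub vin vout by blast
  hence "to_nat ` anc H p \<subset> to_nat ` anc H v"
  proof -
    have "to_nat ` anc H p \<subseteq> to_nat ` anc H v" using sub by (rule image_mono)
    moreover have "to_nat v \<in> to_nat ` anc H v" using vin by simp
    moreover have "to_nat v \<notin> to_nat ` anc H p"
      using vout inj_image_mem_iff[OF inj_to_nat] by metis
    ultimately show ?thesis by blast
  qed
  then show ?thesis unfolding rk_def
    by (intro set_encode_strict) (auto simp: anc_finite[OF ac])
qed

lemma rk_inj:
  assumes ac: "acyclic_via id H" and eq: "rk H v = rk H v'"
  shows "v = v'"
proof -
  have "to_nat ` anc H v = to_nat ` anc H v'"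
    using eq unfolding rk_def by (subst (asm) set_encode_eq) (auto simp: anc_finite[OF ac])
  hence a: "anc H v = anc H v'" by (simp add: inj_image_eq_iff)
  have "v \<in> anc H v" "v' \<in> anc H v'" unfolding anc_def by simp_all
  hence "v \<in> anc H v'" "v' \<in> anc H v" using a by simp_all
  hence "(v,v') \<in> (par H)\<^sup>*" "(v',v) \<in> (par H)\<^sup>*" unfolding anc_def by simp_all
  from par_dep[OF this(1)] par_dep[OF this(2)] show ?thesis by auto
qed

lemma enum_by_rank:
  fixes R :: "'b \<Rightarrow> nat"
  assumes inj: "inj_on R H"
  shows "\<exists>e. bij_betw e (if finite H then {1..card H} else {1..}) H \<and>
     (\<forall>m\<in>(if finite H then {1..card H} else {1..}). \<forall>n\<in>(if finite H then {1..card H} else {1..}).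
        m < n \<longrightarrow> R (e m) < R (e n))"
proof -
  define K where "K = R ` H"
  have bR: "bij_betw R H K" using inj unfolding K_def by (simp add: bij_betw_def)
  have bI: "bij_betw (the_inv_into H R) K H" using bij_betw_the_inv_into[OF bR] .
  have Rinv: "R (the_inv_into H R k) = k" if "k \<in> K" for k
    using that f_the_inv_into_f[OF inj] unfolding K_def by blast
  define e where "e n = the_inv_into H R (enumerate K (n - 1))" for n
  show ?thesis
  proof (cases "finite H")
    case True
    have fK: "finite K" and cK: "card K = card H" using True inj unfolding K_def by (auto simp: card_image)
    have b1: "bij_betw (\<lambda>n. n - 1) {1..card H} {..<card K}"
      unfolding cK by (rule bij_betwI[where g="\<lambda>n. n + 1"]) auto
    have B1: "bij_betw e {1..card H} H"
      unfolding e_def using bij_betw_trans[OF bij_betw_trans[OF b1 finite_bij_enumerate[OF fK]] bI]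
      by (simp add: comp_def)
    have B2: "R (e m) < R (e n)" if "m \<in> {1..card H}" "n \<in> {1..card H}" "m < n" for m n
    proof -
      have "enumerate K (m - 1) < enumerate K (n - 1)"
        using that cK by (intro finite_enumerate_mono[OF _ fK]) auto
      moreover have "enumerate K (m-1) \<in> K" "enumerate K (n-1) \<in> K"
        using that cK by (auto intro!: finite_enumerate_in_set[OF fK])
      ultimately show ?thesis unfolding e_def using Rinv by simp
    qed
    have "bij_betw e {1..card H} H \<and> (\<forall>m\<in>{1..card H}. \<forall>n\<in>{1..card H}. m < n \<longrightarrow> R (e m) < R (e n))"
    proof (intro conjI ballI impI)
      show "bij_betw e {1..card H} H" by (rule B1)
    next
      fix m n :: nat assume "m \<in> {1..card H}" "n \<in> {1..card H}" "m < n"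
      then show "R (e m) < R (e n)" by (rule B2)
    qed
    moreover have II: "(if finite H then {1..card H} else {1..}) = ({1..card H} :: nat set)" by (simp only: True if_True)
    ultimately show ?thesis by (simp only: II) (rule exI)
  next
    case False
    have iK: "infinite K" using False inj unfolding K_def using finite_imageD by blast
    have b1: "bij_betw (\<lambda>n. n - 1) {1..} (UNIV::nat set)"
      by (rule bij_betwI[where g="\<lambda>n. n + 1"]) auto
    have B1: "bij_betw e {1..} H"
      unfolding e_def using bij_betw_trans[OF bij_betw_trans[OF b1 bij_enumerate[OF iK]] bI]
      by (simp add: comp_def)
    have B2: "R (e m) < R (e n)" if "m \<in> {1..}" "n \<in> {1..}" "m < n" for m n
    proof -
      have "enumerate K (m - 1) < enumerate K (n - 1)"
        using that by (intro enumerate_mono[OF _ iK]) auto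
      moreover have "enumerate K (m-1) \<in> K" "enumerate K (n-1) \<in> K"
        using iK by (auto intro!: enumerate_in_set)
      ultimately show ?thesis unfolding e_def using Rinv by simp
    qed
    have "bij_betw e {1..} H \<and> (\<forall>m\<in>{1..}. \<forall>n\<in>{1..}. m < n \<longrightarrow> R (e m) < R (e n))"
    proof (intro conjI ballI impI)
      show "bij_betw e {1..} H" by (rule B1)
    next
      fix m n :: nat assume "m \<in> {1..}" "n \<in> {1..}" "m < n"
      then show "R (e m) < R (e n)" by (rule B2)
    qed
    moreover have II: "(if finite H then {1..card H} else {1..}) = ({1..} :: nat set)" by (simp only: False if_False)
    ultimately show ?thesis by (simp only: II) (rule exI)
  qed
qed

lemma forest_order:
  fixes H :: "('v::countable) set set"
  assumes ac: "acyclic_via id H" and two: "\<forall>h\<in>H. \<exists>x y. h = {x,y}"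
  shows "\<exists>e. bij_betw e (if finite H then {1..card H} else {1..}) H \<and>
     (\<forall>n\<in>(if finite H then {1..card H} else {1..}). \<exists>u\<in>e n.
        \<forall>m\<in>(if finite H then {1..card H} else {1..}). m < n \<longrightarrow> u \<notin> e m)"
proof -
  define I where "I = (if finite H then {1..card H} else ({1..} :: nat set))"
  have inj: "inj_on (\<lambda>h. rk H (phi H h)) H"
    using phi_inj[OF ac two] rk_inj[OF ac] unfolding inj_on_def by metis
  obtain e where e: "bij_betw e I H" and mono: "\<forall>m\<in>I. \<forall>n\<in>I. m < n \<longrightarrow> rk H (phi H (e m)) < rk H (phi H (e n))"
    using enum_by_rank[OF inj] unfolding I_def by blast
  have "\<forall>n\<in>I. \<exists>u\<in>e n. \<forall>m\<in>I. m < n \<longrightarrow> u \<notin> e m"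
  proof (intro ballI)
    fix n assume n: "n \<in> I"
    have en: "e n \<in> H" using e n bij_betwE by blast
    obtain x where x: "e n = {x, phi H (e n)}" "(x, phi H (e n)) \<in> par H" using phi_ex[OF ac two en] by blast
    have "\<forall>m\<in>I. m < n \<longrightarrow> phi H (e n) \<notin> e m"
    proof (intro ballI impI notI)
      fix m assume m: "m \<in> I" "m < n" and inm: "phi H (e n) \<in> e m"
      have em: "e m \<in> H" using e m bij_betwE by blast
      have "e m \<noteq> e n" using bij_betw_imp_inj_on[OF e] m n by (metis inj_on_contraD less_irrefl)
      hence "(phi H (e n), phi H (e m)) \<in> par H" using phi_fresh[OF ac two en em _ inm] by blast
      hence "rk H (phi H (e n)) < rk H (phi H (e m))" by (rule rk_less[OF ac])
      then show False using mono m n by (meson less_asym)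
    qed
    then show "\<exists>u\<in>e n. \<forall>m\<in>I. m < n \<longrightarrow> u \<notin> e m" using x(1) by auto
  qed
  then show ?thesis using e unfolding I_def by blast
qed



lemma set_part1:
  assumes "A \<inter> B = {}" "e \<notin> A \<union> B"
  shows "(X \<inter> insert e (A \<union> B) = insert e A) \<longleftrightarrow> (e \<in> X \<and> A \<subseteq> X \<and> B \<inter> X = {})"
  using assms by auto

lemma set_part2:
  assumes "A \<inter> B = {}"
  shows "(X \<inter> (A \<union> B) = A) \<longleftrightarrow> (A \<subseteq> X \<and> B \<inter> X = {})"
  using assms by auto

theorem claim2p1:
  fixes M :: "'a measure" and F :: "'a \<Rightarrow> (int ^ 'd) set set" and H :: "(int ^ 'd) set set"
  assumes "is_wusf M F"
    and "H \<subseteq> zd_edges"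
    and "acyclic_via id H"
  shows "\<exists>e :: nat \<Rightarrow> (int ^ 'd) set.
           bij_betw e (if finite H then {1..card H} else {1..}) H \<and>
           (\<forall>n \<in> (if finite H then {1..card H} else {1..}). \<forall>A B.
              A \<union> B = e ` {1..<n} \<and> A \<inter> B = {} \<longrightarrow>
              measure M {\<omega>\<in>space M. e n \<in> F \<omega> \<and> A \<subseteq> F \<omega> \<and> B \<inter> F \<omega> = {}}
                \<ge> (1 / (2 * real CARD('d))) * measure M {\<omega>\<in>space M. A \<subseteq> F \<omega> \<and> B \<inter> F \<omega> = {}})"
proof -
  define I where "I = (if finite H then {1..card H} else ({1..} :: nat set))"
  have two: "\<forall>h\<in>H. \<exists>x y. h = {x,y}" using assms(2) unfolding zd_edges_def by blast
  obtain e where e: "bij_betw e I H" and fr: "\<forall>n\<in>I. \<exists>u\<in>e n. \<forall>m\<in>I. m < n \<longrightarrow> u \<notin> e m"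
    using forest_order[OF assms(3) two] unfolding I_def by blast
  have main: "measure M {\<omega>\<in>space M. e n \<in> F \<omega> \<and> A \<subseteq> F \<omega> \<and> B \<inter> F \<omega> = {}}
                \<ge> (1 / (2 * real CARD('d))) * measure M {\<omega>\<in>space M. A \<subseteq> F \<omega> \<and> B \<inter> F \<omega> = {}}"
    if n: "n \<in> I" and AB: "A \<union> B = e ` {1..<n}" "A \<inter> B = {}" for n A B
  proof -
    have sub: "{1..<n} \<subseteq> I" using n unfolding I_def by (auto split: if_splits)
    define S where "S = A \<union> B"
    have Sf: "finite S" using AB unfolding S_def by simp
    have SH: "S \<subseteq> H" using AB sub e unfolding S_def bij_betw_def by auto
    have Sz: "S \<subseteq> zd_edges" using SH assms(2) by auto
    have AS: "A \<subseteq> S" unfolding S_def by auto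
    have enH: "e n \<in> H" using e n unfolding bij_betw_def by auto
    have enS: "e n \<notin> S"
    proof
      assume "e n \<in> S"
      then obtain m where m: "m \<in> {1..<n}" "e n = e m" using AB unfolding S_def by auto
      have "n = m" using inj_onD[OF bij_betw_imp_inj_on[OF e] m(2) n] m(1) sub by auto
      then show False using m(1) by auto
    qed
    obtain u where u: "u \<in> e n" "\<forall>m\<in>I. m < n \<longrightarrow> u \<notin> e m" using fr n by blast
    have fresh: "\<forall>g\<in>S. u \<notin> g"
    proof (intro ballI notI)
      fix g assume g: "g \<in> S" "u \<in> g"
      then obtain m where m: "m \<in> {1..<n}" "g = e m" using AB(1) unfolding S_def by blast
      have "m \<in> I" "m < n" using m(1) sub by auto
      then show False using u(2) g(2) m(2) by blast
    qed
    have ez: "e n \<in> zd_edges" using enH assms(2) by auto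
    then obtain x y where xy: "e n = {x,y}" "(\<Sum>i\<in>UNIV. \<bar>x $ i - y $ i\<bar>) = 1"
      unfolding zd_edges_def by auto
    have "x \<noteq> y" using xy(2) by auto
    then obtain w where w: "e n = {u,w}" "u \<noteq> w" using xy(1) u(1) by auto
    have ez': "{u,w} \<in> zd_edges" using ez w by simp
    have eS': "{u,w} \<notin> S" using enS w by simp
    have ineq: "measure M {\<omega>\<in>space M. F \<omega> \<inter> insert {u,w} S = insert {u,w} A}
           \<ge> (1 / (2 * real CARD('d))) * measure M {\<omega>\<in>space M. F \<omega> \<inter> S = A}"
      using step_ineq[OF assms(1) Sf Sz AS ez' w(2) eS' fresh] .
    have s1: "{\<omega>\<in>space M. F \<omega> \<inter> insert {u,w} S = insert {u,w} A}
        = {\<omega>\<in>space M. e n \<in> F \<omega> \<and> A \<subseteq> F \<omega> \<and> B \<inter> F \<omega> = {}}"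
      unfolding S_def w(1) using set_part1[OF AB(2) eS'[unfolded S_def]] by (simp only:)
    have s2: "{\<omega>\<in>space M. F \<omega> \<inter> S = A} = {\<omega>\<in>space M. A \<subseteq> F \<omega> \<and> B \<inter> F \<omega> = {}}"
      unfolding S_def using set_part2[OF AB(2)] by (simp only:)
    show ?thesis using ineq unfolding s1 s2 .
  qed
  show ?thesis using e main unfolding I_def by blast
qed


end
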